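(* Let $n>2$ and $k\ge 2n-1$ be integers. Suppose that $A$ is a set of $k$ integers satisfying $$|S_n(A)|=(k-1)n-3\binom n2+1=kn-\tfrac 32 n^2+\tfrac n2+1.$$ Then $A$ contains at least $n-1$ negative integers and also at least $n-1$ positive integers.
   Context: For a finite set $A\subseteq\mathbb Z$ and a positive integer $n$, define $$S_n(A)=\{a_1+\cdots+a_n:\ a_1,\ldots,a_n\in A,\ \text{and}\ a_i^2\neq a_j^2\ \text{for}\ 1\le i<j\le n\}.$$ *)

theory Defs
  imports Main
begin

definition restricted_sumset :: "nat \<Rightarrow> int set \<Rightarrow> int set" where
  "restricted_sumset n A =
     {(\<Sum>i<n. a i) | a. (\<forall>i<n. a i \<in> A) \<and> (\<forall>i<n. \<forall>j<n. i < j \<longrightarrow> (a i)^2 \<noteq> (a j)^2)}"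

end

theory Submission
  imports Defs
begin


definition SS :: "nat \<Rightarrow> int set \<Rightarrow> int set" where
  "SS n A = (\<lambda>C. \<Sum>x\<in>C. x) ` {C. C \<subseteq> A \<and> finite C \<and> card C = n \<and> inj_on (\<lambda>x. x^2) C}"

lemma SS_memI:
  assumes "C \<subseteq> A" "finite C" "card C = n" "inj_on (\<lambda>x::int. x^2) C"
  shows "(\<Sum>x\<in>C. x) \<in> SS n A"
  using assms unfolding SS_def by blast

lemma SS_memE:
  assumes "s \<in> SS n A"
  obtains C where "C \<subseteq> A" "finite C" "card C = n" "inj_on (\<lambda>x::int. x^2) C" "s = (\<Sum>x\<in>C. x)"
  using assms unfolding SS_def by blast

lemma SS_finite: "finite A \<Longrightarrow> finite (SS n A)"
proof -
  assume "finite A"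
  have "{C. C \<subseteq> A \<and> finite C \<and> card C = n \<and> inj_on (\<lambda>x::int. x^2) C} \<subseteq> Pow A" by blast
  then have "finite {C. C \<subseteq> A \<and> finite C \<and> card C = n \<and> inj_on (\<lambda>x::int. x^2) C}"
    using \<open>finite A\<close> finite_subset by blast
  then show ?thesis unfolding SS_def by blast
qed

lemma SS_eq: "restricted_sumset n A = SS n A"
proof
  show "restricted_sumset n A \<subseteq> SS n A"
  proof
    fix s assume "s \<in> restricted_sumset n A"
    then obtain a where s: "s = (\<Sum>i<n. a i)" and aA: "\<forall>i<n. a i \<in> A"
      and sq: "\<forall>i<n. \<forall>j<n. i < j \<longrightarrow> (a i)^2 \<noteq> (a j)^2"
      unfolding restricted_sumset_def by blast
    have sq2: "i = j" if h: "(a i)^2 = (a j)^2" "i < n" "j < n" for i j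
    proof (rule ccontr)
      assume ne: "i \<noteq> j"
      show False
      proof (cases "i < j")
        case True
        then show ?thesis using sq h by blast
      next
        case False
        then have "j < i" using ne by simp
        then have "(a j)^2 \<noteq> (a i)^2" using sq h(2,3) by blast
        then show ?thesis using h(1) by simp
      qed
    qed
    have inj: "inj_on a {..<n}"
    proof (rule inj_onI)
      fix i j assume "i \<in> {..<n}" "j \<in> {..<n}" "a i = a j"
      then show "i = j" using sq2[of i j] by simp
    qed
    have s2: "s = (\<Sum>x\<in>a ` {..<n}. x)"
      using s sum.reindex[OF inj, of "\<lambda>x. x"] by simp
    have i2: "inj_on (\<lambda>x::int. x^2) (a ` {..<n})"
    proof (rule inj_onI)
      fix x y assume "x \<in> a ` {..<n}" "y \<in> a ` {..<n}" "x^2 = y^2"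
      then obtain i j where "i < n" "j < n" "x = a i" "y = a j" "(a i)^2 = (a j)^2" by auto
      then show "x = y" using sq2[of i j] by simp
    qed
    have c2: "card (a ` {..<n}) = n" using card_image[OF inj] by simp
    have sub: "a ` {..<n} \<subseteq> A" using aA by auto
    have fin: "finite (a ` {..<n})" by simp
    show "s \<in> SS n A" using SS_memI[OF sub fin c2 i2] s2 by simp
  qed
next
  show "SS n A \<subseteq> restricted_sumset n A"
  proof
    fix s assume "s \<in> SS n A"
    then obtain C where C: "C \<subseteq> A" "finite C" "card C = n" "inj_on (\<lambda>x::int. x^2) C" "s = (\<Sum>x\<in>C. x)"
      by (rule SS_memE)
    obtain h where h: "bij_betw h {0..<n} C" using ex_bij_betw_nat_finite[OF C(2)] C(3) by auto
    have hl: "bij_betw h {..<n} C" using h by (simp add: lessThan_atLeast0)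
    have hinj: "inj_on h {..<n}" using hl by (rule bij_betw_imp_inj_on)
    have hC: "h i \<in> C" if "i < n" for i using hl that bij_betwE by blast
    have "s = (\<Sum>i<n. h i)" using C(5) sum.reindex_bij_betw[OF hl, of "\<lambda>x. x"] by simp
    moreover have "\<forall>i<n. h i \<in> A" using hC C(1) by blast
    moreover have "\<forall>i<n. \<forall>j<n. i < j \<longrightarrow> (h i)^2 \<noteq> (h j)^2"
    proof (intro allI impI)
      fix i j assume ij: "i < n" "j < n" "i < j"
      then have "h i \<noteq> h j" using inj_on_contraD[OF hinj, of i j] by simp
      then show "(h i)^2 \<noteq> (h j)^2" using inj_on_contraD[OF C(4) _ hC[OF ij(1)] hC[OF ij(2)]] by simp
    qed
    ultimately show "s \<in> restricted_sumset n A" unfolding restricted_sumset_def by blast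
  qed
qed

lemma SS_neg: "uminus ` SS n A \<subseteq> SS n (uminus ` A)"
proof
  fix s assume "s \<in> uminus ` SS n A"
  then obtain t where t: "t \<in> SS n A" "s = - t" by blast
  obtain C where C: "C \<subseteq> A" "finite C" "card C = n" "inj_on (\<lambda>x::int. x^2) C" "t = (\<Sum>x\<in>C. x)"
    using t(1) by (rule SS_memE)
  have inj: "inj_on uminus C" by (simp add: inj_on_def)
  have "s = (\<Sum>x\<in>uminus ` C. x)" using t C sum.reindex[OF inj, of "\<lambda>x. x"] by (simp add: sum_negf)
  moreover have "card (uminus ` C) = n" using card_image[OF inj] C by simp
  moreover have "inj_on (\<lambda>x::int. x^2) (uminus ` C)"
  proof (rule inj_onI)
    fix x y assume "x \<in> uminus ` C" "y \<in> uminus ` C" "x^2 = (y::int)^2"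
    then obtain u w where "u \<in> C" "w \<in> C" "x = - u" "y = - w" "u^2 = w^2" by auto
    then show "x = y" using inj_onD[OF C(4)] by simp
  qed
  moreover have "uminus ` C \<subseteq> uminus ` A" using C(1) by blast
  moreover have "finite (uminus ` C)" using C(2) by simp
  ultimately show "s \<in> SS n (uminus ` A)" using SS_memI by metis
qed

lemma SS_neg_card: "finite A \<Longrightarrow> card (SS n (uminus ` A)) = card (SS n A)"
proof -
  assume f: "finite A"
  have e: "uminus ` uminus ` A = (A::int set)" by (simp add: image_image)
  have 1: "uminus ` SS n A \<subseteq> SS n (uminus ` A)" by (rule SS_neg)
  have 2: "uminus ` SS n (uminus ` A) \<subseteq> SS n A" using SS_neg[of n "uminus ` A"] e by simp
  have i: "inj_on (uminus :: int \<Rightarrow> int) X" for X by (simp add: inj_on_def)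
  have "card (SS n A) = card (uminus ` SS n A)" using card_image[OF i] by simp
  also have "\<dots> \<le> card (SS n (uminus ` A))" using card_mono[OF SS_finite 1] f by simp
  finally have a: "card (SS n A) \<le> card (SS n (uminus ` A))" .
  have "card (SS n (uminus ` A)) = card (uminus ` SS n (uminus ` A))" using card_image[OF i] by simp
  also have "\<dots> \<le> card (SS n A)" using card_mono[OF SS_finite[OF f] 2] by simp
  finally show ?thesis using a by simp
qed

lemma top_exists:
  fixes X :: "int set"
  assumes "finite X" "n \<le> card X"
  shows "\<exists>T \<subseteq> X. card T = n \<and> (\<forall>t\<in>T. \<forall>x\<in>X-T. x < t)"
  using assms(2)
proof (induction n)
  case 0 then show ?case by auto
next
  case (Suc n)
  then obtain T where T: "T \<subseteq> X" "card T = n" "\<forall>t\<in>T. \<forall>x\<in>X-T. x < t" by auto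
  have "X - T \<noteq> {}"
  proof
    assume "X - T = {}"
    then have "X \<subseteq> T" by blast
    moreover have "finite T" using T(1) assms(1) finite_subset by blast
    ultimately have "card X \<le> card T" by (rule card_mono[rotated])
    then show False using T(2) Suc.prems by simp
  qed
  define m where "m = Max (X - T)"
  have m: "m \<in> X - T" unfolding m_def using \<open>X - T \<noteq> {}\<close> assms(1) by (intro Max_in) auto
  have mx: "\<forall>x\<in>X - T. x \<le> m" using m_def assms(1) by simp
  have "finite T" using T(1) assms(1) finite_subset by blast
  have "card (insert m T) = Suc n" using m T(2) \<open>finite T\<close> by simp
  moreover have "\<forall>t\<in>insert m T. \<forall>x\<in>X - insert m T. x < t"
  proof (intro ballI)
    fix t x assume t: "t \<in> insert m T" and x: "x \<in> X - insert m T"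
    show "x < t"
    proof (cases "t = m")
      case True
      have "x \<in> X - T" "x \<noteq> m" using x by auto
      then have "x \<le> m" using mx by blast
      then show ?thesis using \<open>x \<noteq> m\<close> True by simp
    next
      case False
      then show ?thesis using t x T(3) by blast
    qed
  qed
  moreover have "insert m T \<subseteq> X" using m T(1) by auto
  ultimately show ?case by (intro exI[where x="insert m T"]) simp
qed

lemma top_sum:
  fixes X :: "int set"
  assumes "finite X" "T \<subseteq> X" "C \<subseteq> X" "card C = card T" "\<forall>t\<in>T. \<forall>x\<in>X-T. x < t"
  shows "(\<Sum>x\<in>C. x) \<le> (\<Sum>x\<in>T. x)"
proof -
  have fC: "finite C" and fT: "finite T" using assms finite_subset by blast+
  have cC: "(\<Sum>x\<in>C. x) = (\<Sum>x\<in>C \<inter> T. x) + (\<Sum>x\<in>C - T. x)" using sum.Int_Diff[OF fC] by blast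
  have cT: "(\<Sum>x\<in>T. x) = (\<Sum>x\<in>T \<inter> C. x) + (\<Sum>x\<in>T - C. x)" using sum.Int_Diff[OF fT] by blast
  have cd: "card (C - T) = card (T - C)"
  proof -
    have c1: "card C = card (C \<inter> T) + card (C - T)" by (rule card_Int_Diff[OF fC])
    have c2: "card T = card (C \<inter> T) + card (T - C)" using card_Int_Diff[OF fT, of C] by (simp add: Int_commute)
    show ?thesis using c1 c2 assms(4) by linarith
  qed
  have eq: "(\<Sum>x\<in>C \<inter> T. x) = (\<Sum>x\<in>T \<inter> C. x)" by (simp add: Int_commute)
  show ?thesis
  proof (cases "C - T = {}")
    case True
    then have "card (T - C) = 0" using cd by (metis card.empty)
    then have "T - C = {}" using fT by simp
    then have "(\<Sum>x\<in>C - T. x) = 0" "(\<Sum>x\<in>T - C. x) = 0" using True by simp_all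
    then show ?thesis using cC cT eq by linarith
  next
    case False
    define M where "M = Max (C - T)"
    have Mge: "\<forall>x\<in>C - T. x \<le> M" unfolding M_def using fC by (intro ballI Max_ge) auto
    have Min: "M \<in> C - T" unfolding M_def using False fC by (intro Max_in) auto
    have Mle: "\<forall>t\<in>T - C. M \<le> t"
    proof
      fix t assume "t \<in> T - C"
      moreover have "M \<in> X - T" using Min assms(3) by blast
      ultimately have "M < t" using assms(5) by blast
      then show "M \<le> t" by simp
    qed
    have s1: "(\<Sum>x\<in>C - T. x) \<le> of_nat (card (C-T)) * M"
      using sum_bounded_above[of "C - T" "\<lambda>x. x" M] Mge by blast
    have s2: "of_nat (card (T-C)) * M \<le> (\<Sum>x\<in>T - C. x)"
      using sum_bounded_below[of "T - C" M "\<lambda>x. x"] Mle by blast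
    have "(of_nat (card (C-T)) :: int) * M = of_nat (card (T-C)) * M" using cd by simp
    then show ?thesis using cC cT s1 s2 eq by linarith
  qed
qed

lemma nonneg_sum:
  fixes A :: "int set"
  assumes "finite A" "C \<subseteq> A"
  shows "(\<Sum>x\<in>C. x) \<le> (\<Sum>x\<in>{a\<in>A. 0 \<le> a}. x)"
proof -
  have fC: "finite C" using assms finite_subset by blast
  have "(\<Sum>x\<in>C. x) = (\<Sum>x\<in>C \<inter> {a\<in>A. 0 \<le> a}. x) + (\<Sum>x\<in>C - {a\<in>A. 0 \<le> a}. x)"
    using sum.Int_Diff[OF fC] by blast
  moreover have "(\<Sum>x\<in>C - {a\<in>A. 0 \<le> a}. x) \<le> 0" by (rule sum_nonpos) (use assms in auto)
  moreover have "(\<Sum>x\<in>C \<inter> {a\<in>A. 0 \<le> a}. x) \<le> (\<Sum>x\<in>{a\<in>A. 0 \<le> a}. x)"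
    by (rule sum_mono2) (use assms in auto)
  ultimately show ?thesis by linarith
qed



lemma nonneg_inj: "inj_on (\<lambda>x::int. x^2) {a\<in>A. 0 \<le> a}"
  by (rule inj_onI) (simp add: power2_eq_iff_nonneg)

lemma sq_eq_int: "(x::int)^2 = y^2 \<longleftrightarrow> x = y \<or> x = - y"
  by (rule power2_eq_iff)

lemma claim:
  fixes A :: "int set"
  assumes "finite A" "2 \<le> n" "card {a\<in>A. a < 0} + 2 \<le> n" "n \<le> card {a\<in>A. 0 \<le> a}"
  shows "2 * int n * (int (card A) - int n) - int n * (int n - 1) + 4 \<le> 2 * int (card (SS n A))"
  using assms
proof (induction "card A" arbitrary: A n rule: less_induct)
  case less
  define N where "N = {a\<in>A. a < 0}"
  define U where "U = {a\<in>A. 0 \<le> a}"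
  have fA: "finite A" using less.prems by simp
  have n2: "2 \<le> n" using less.prems by simp
  have fN: "finite N" and fU: "finite U" using fA unfolding N_def U_def by simp_all
  have AUN: "A = U \<union> N" unfolding U_def N_def by auto
  have disj: "U \<inter> N = {}" unfolding U_def N_def by auto
  have cardA: "card A = card U + card N" using AUN disj fU fN card_Un_disjoint by metis
  have dn: "card N + 2 \<le> n" using less.prems N_def by simp
  have un: "n \<le> card U" using less.prems U_def by simp
  have fSS: "finite (SS n A)" using SS_finite fA by blast
  have Uinj: "inj_on (\<lambda>x::int. x^2) U" unfolding U_def by (rule nonneg_inj)
  consider (big) "n + 1 \<le> card U" | (d0) "card U = n" "N = {}" | (nc) "card U = n" "\<exists>q\<in>N. - q \<notin> A"
    | (allc) "card U = n" "N \<noteq> {}" "\<forall>q\<in>N. - q \<in> A"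
    using un by force
  then show ?case
  proof cases
    case big
    have Une: "U \<noteq> {}" using big by auto
    define b where "b = Max A"
    have Ane: "A \<noteq> {}" using Une AUN by blast
    have bA: "b \<in> A" unfolding b_def using fA Ane by (rule Max_in)
    have bge: "\<forall>x\<in>A. x \<le> b" unfolding b_def using fA by simp
    obtain u where "u \<in> U" using Une by blast
    then have b0: "0 \<le> b" using bge U_def by force
    define A' where "A' = A - {b}"
    have fA': "finite A'" using fA A'_def by simp
    have cA': "card A' = card A - 1" using A'_def bA fA by simp
    have N': "{a\<in>A'. a < 0} = N" unfolding A'_def N_def using b0 by auto
    have U': "{a\<in>A'. 0 \<le> a} = U - {b}" unfolding A'_def U_def by auto
    have bU: "b \<in> U" unfolding U_def using bA b0 by simp
    have cU': "card (U - {b}) = card U - 1" using fU bU by simp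
    have IH: "2 * int n * (int (card A') - int n) - int n * (int n - 1) + 4 \<le> 2 * int (card (SS n A'))"
      apply (rule less.hyps)
      using cA' cardA big apply simp
      using fA' apply simp
      using n2 apply simp
      using N' dn apply simp
      using U' cU' big by simp
    have "card (U - {b}) \<le> card A'" using fA' U' by (metis (no_types, lifting) card_mono mem_Collect_eq subsetI)
    then have nA': "n \<le> card A'" using cU' big by simp
    obtain T where T: "T \<subseteq> A'" "card T = n" "\<forall>t\<in>T. \<forall>x\<in>A'-T. x < t"
      using top_exists[OF fA' nA'] by blast
    have fT: "finite T" using T(1) fA' finite_subset by blast
    have Tnn: "0 \<le> t" if tT: "t \<in> T" for t
    proof (rule ccontr)
      assume "\<not> 0 \<le> t"
      then have tneg: "t < 0" by simp
      have "U - {b} \<subseteq> T - {t}"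
      proof
        fix u assume u: "u \<in> U - {b}"
        then have uA': "u \<in> A'" and u0: "0 \<le> u" unfolding A'_def U_def by auto
        have "u \<in> T"
        proof (rule ccontr)
          assume "u \<notin> T"
          then have "u < t" using T(3) tT uA' by blast
          then show False using u0 tneg by simp
        qed
        moreover have "u \<noteq> t" using u0 tneg by auto
        ultimately show "u \<in> T - {t}" by simp
      qed
      then have "card (U - {b}) \<le> card (T - {t})" using fT by (simp add: card_mono)
      moreover have "card (T - {t}) = n - 1" using T(2) tT fT by simp
      ultimately show False using cU' big n2 by simp
    qed
    have bT: "b \<notin> T" using T(1) A'_def by auto
    define NEW where "NEW = (\<lambda>y. (\<Sum>x\<in>T. x) - y + b) ` T"
    have cNEW: "card NEW = n" unfolding NEW_def using T(2)
      by (subst card_image) (auto simp: inj_on_def)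
    have fNEW: "finite NEW" unfolding NEW_def using fT by simp
    have NEWin: "NEW \<subseteq> SS n A"
    proof
      fix s assume "s \<in> NEW"
      then obtain y where y: "y \<in> T" "s = (\<Sum>x\<in>T. x) - y + b" unfolding NEW_def by blast
      define C where "C = insert b (T - {y})"
      have bC: "b \<notin> T - {y}" using bT by simp
      have "s = (\<Sum>x\<in>C. x)" unfolding C_def using fT bC y by (simp add: sum_diff1)
      moreover have "C \<subseteq> A" unfolding C_def using bA T(1) A'_def by auto
      moreover have "finite C" unfolding C_def using fT by simp
      moreover have "card C = n" unfolding C_def using fT bC y T(2) n2 by simp
      moreover have "inj_on (\<lambda>x::int. x^2) C"
      proof -
        have "C \<subseteq> {a\<in>A. 0 \<le> a}" unfolding C_def using bA b0 T(1) A'_def Tnn by auto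
        then show ?thesis using nonneg_inj inj_on_subset by blast
      qed
      ultimately show "s \<in> SS n A" using SS_memI by metis
    qed
    have SSmono: "SS n A' \<subseteq> SS n A"
    proof
      fix s assume "s \<in> SS n A'"
      then obtain C where C: "C \<subseteq> A'" "finite C" "card C = n" "inj_on (\<lambda>x::int. x^2) C" "s = (\<Sum>x\<in>C. x)"
        by (rule SS_memE)
      have "C \<subseteq> A" using C(1) A'_def by auto
      then show "s \<in> SS n A" using SS_memI C by metis
    qed
    have below: "s \<le> (\<Sum>x\<in>T. x)" if sA: "s \<in> SS n A'" for s
    proof -
      obtain C where C: "C \<subseteq> A'" "finite C" "card C = n" "inj_on (\<lambda>x::int. x^2) C" "s = (\<Sum>x\<in>C. x)"
        using sA by (rule SS_memE)
      show ?thesis using top_sum[OF fA' T(1) C(1)] C(3,5) T(2,3) by simp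
    qed
    have above: "(\<Sum>x\<in>T. x) < s" if sN: "s \<in> NEW" for s
    proof -
      obtain y where y: "y \<in> T" "s = (\<Sum>x\<in>T. x) - y + b" using sN unfolding NEW_def by blast
      have "y \<in> A" "y \<noteq> b" using y(1) T(1) A'_def by auto
      then have "y < b" using bge by force
      then show ?thesis using y(2) by simp
    qed
    have dj: "SS n A' \<inter> NEW = {}" using below above by force
    have "card (SS n A') + n = card (SS n A' \<union> NEW)"
      using card_Un_disjoint[OF SS_finite[OF fA'] fNEW dj] cNEW by simp
    also have "\<dots> \<le> card (SS n A)" using card_mono[OF fSS] SSmono NEWin by simp
    finally have cmp: "card (SS n A') + n \<le> card (SS n A)" .
    have kk: "int (card A) = int (card A') + 1" using cA' cardA big by simp
    have e: "2 * int n * (int (card A) - int n) = 2 * int n * (int (card A') - int n) + 2 * int n"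
      unfolding kk by (simp add: algebra_simps)
    show ?thesis using IH cmp e by linarith
  next
    case d0
    have AU: "A = U" using AUN d0 by simp
    have "(\<Sum>x\<in>A. x) \<in> SS n A"
      by (rule SS_memI) (use AU fA Uinj d0 in auto)
    then have "SS n A \<noteq> {}" by blast
    then have "0 < card (SS n A)" using fSS by (simp add: card_gt_0_iff)
    then have c1: "1 \<le> card (SS n A)" by simp
    have i2: "2 \<le> int n" using n2 by simp
    have "2 * 1 \<le> int n * (int n - 1)" by (rule mult_mono) (use i2 in simp_all)
    moreover have "card A = n" using AU d0 by simp
    ultimately show ?thesis using c1 by simp
  next
    case nc
    then obtain q where qN: "q \<in> N" and qA: "- q \<notin> A" by blast
    have q0: "q < 0" "q \<in> A" using qN N_def by auto
    define A' where "A' = A - {q}"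
    have fA': "finite A'" using fA A'_def by simp
    have cA': "card A' = card A - 1" using A'_def q0 fA by simp
    have "N \<noteq> {}" using qN by blast
    then have "0 < card N" using fN by (simp add: card_gt_0_iff)
    then have cN1: "1 \<le> card N" by simp
    have N': "{a\<in>A'. a < 0} = N - {q}" unfolding A'_def N_def by auto
    have U': "{a\<in>A'. 0 \<le> a} = U" unfolding A'_def U_def using q0 by auto
    have cN': "card {a\<in>A'. a < 0} = card N - 1" using N' qN fN by simp
    have IH: "2 * int (n-1) * (int (card A') - int (n-1)) - int (n-1) * (int (n-1) - 1) + 4
              \<le> 2 * int (card (SS (n-1) A'))"
      apply (rule less.hyps)
      using cA' cardA cN1 apply simp
      using fA' apply simp
      using dn cN1 apply simp
      using cN' dn cN1 apply simp
      using U' nc un by simp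
    have incl: "(\<lambda>s. q + s) ` SS (n-1) A' \<subseteq> SS n A"
    proof
      fix s assume "s \<in> (\<lambda>s. q + s) ` SS (n-1) A'"
      then obtain t where t: "t \<in> SS (n-1) A'" "s = q + t" by blast
      obtain C where C: "C \<subseteq> A'" "finite C" "card C = n - 1" "inj_on (\<lambda>x::int. x^2) C" "t = (\<Sum>x\<in>C. x)"
        using t(1) by (rule SS_memE)
      have qC: "q \<notin> C" using C(1) A'_def by auto
      have "q + t = (\<Sum>x\<in>insert q C. x)" using C(2,5) qC by simp
      moreover have "insert q C \<subseteq> A" using C(1) A'_def q0 by auto
      moreover have "finite (insert q C)" using C(2) by simp
      moreover have "card (insert q C) = n" using C(2,3) qC n2 by simp
      moreover have "inj_on (\<lambda>x::int. x^2) (insert q C)"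
      proof -
        have e: "C - {q} = C" using qC by blast
        have nq: "q^2 \<notin> (\<lambda>x::int. x^2) ` C"
        proof
          assume "q^2 \<in> (\<lambda>x::int. x^2) ` C"
          then obtain x where x: "x \<in> C" "q^2 = x^2" by auto
          then have "x = q \<or> x = - q" using sq_eq_int by auto
          then show False using x(1) qC C(1) A'_def qA by auto
        qed
        show ?thesis unfolding inj_on_insert e using C(4) nq by blast
      qed
      ultimately show "s \<in> SS n A" using t(2) SS_memI by metis
    qed
    have "card (SS (n-1) A') = card ((\<lambda>s. q + s) ` SS (n-1) A')"
      by (rule card_image[symmetric]) (simp add: inj_on_def)
    also have "\<dots> \<le> card (SS n A)" using card_mono[OF fSS incl] .
    finally have cmp: "card (SS (n-1) A') \<le> card (SS n A)" .
    define D where "D = int (card N)"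
    define M where "M = int n"
    have kA: "int (card A) = M + D" using cardA nc D_def M_def by simp
    have kA': "int (card A') = M + D - 1" using cA' kA cardA cN1 by simp
    have n1: "int (n - 1) = M - 1" using n2 M_def by simp
    have DM: "D + 2 \<le> M" using dn D_def M_def by simp
    have IH2: "2 * (M - 1) * D - (M - 1) * (M - 2) + 4 \<le> 2 * int (card (SS (n-1) A'))"
    proof -
      have IH1: "2 * (M - 1) * ((M + D - 1) - (M - 1)) - (M - 1) * ((M - 1) - 1) + 4 \<le> 2 * int (card (SS (n-1) A'))"
        using IH unfolding kA' n1 .
      have e1: "(M + D - 1) - (M - 1) = D" and e2: "(M - 1) - 1 = M - 2" by simp_all
      show ?thesis using IH1 unfolding e1 e2 .
    qed
    have iden: "2 * (M - 1) * D - (M - 1) * (M - 2) = 2 * M * (M + D - M) - M * (M - 1) + (2 * M - 2 - 2 * D)"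
      by (simp add: algebra_simps)
    show ?thesis using IH2 iden cmp DM kA unfolding M_def[symmetric] by simp
  next
    case allc
    define V where "V = uminus ` N"
    have fV: "finite V" unfolding V_def using fN by simp
    have cV: "card V = card N" unfolding V_def by (rule card_image) (simp add: inj_on_def)
    have Vne: "V \<noteq> {}" unfolding V_def using allc by simp
    have Vpos: "0 < p" if "p \<in> V" for p using that unfolding V_def N_def by auto
    have VU: "p \<in> U" if pV: "p \<in> V" for p
    proof -
      obtain q where "q \<in> N" "p = - q" using pV unfolding V_def by blast
      then show ?thesis using allc(3) unfolding U_def N_def by auto
    qed
    have VN: "- p \<in> N" if pV: "p \<in> V" for p using pV unfolding V_def by auto
    define v where "v = Max V"
    have vV: "v \<in> V" unfolding v_def using fV Vne by (rule Max_in)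
    have vge: "\<forall>p\<in>V. p \<le> v" unfolding v_def using fV by simp
    have v0: "0 < v" using Vpos vV by blast
    have vU: "v \<in> U" using VU vV by blast
    have mvN: "- v \<in> N" using VN vV by blast
    have vA: "v \<in> A" and mvA: "- v \<in> A" using vU mvN unfolding U_def N_def by auto
    define A' where "A' = A - {v, - v}"
    have fA': "finite A'" using fA A'_def by simp
    have cA': "card A' = card A - 2" unfolding A'_def using vA mvA v0 fA by (simp add: card_Diff_subset)
    have "0 < card V" using Vne fV by (simp add: card_gt_0_iff)
    then have cN1: "1 \<le> card N" using cV by simp
    have N': "{a\<in>A'. a < 0} = N - {- v}" unfolding A'_def N_def using v0 by auto
    have U': "{a\<in>A'. 0 \<le> a} = U - {v}" unfolding A'_def U_def using v0 by auto
    have cN': "card {a\<in>A'. a < 0} = card N - 1" using N' mvN fN by simp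
    have cU': "card {a\<in>A'. 0 \<le> a} = n - 1" using U' vU fU allc by simp
    have IH: "2 * int (n-1) * (int (card A') - int (n-1)) - int (n-1) * (int (n-1) - 1) + 4
              \<le> 2 * int (card (SS (n-1) A'))"
      apply (rule less.hyps)
      using cA' cardA cN1 allc apply simp
      using fA' apply simp
      using dn cN1 apply simp
      using cN' dn cN1 apply simp
      using cU' by simp
    define SU where "SU = (\<Sum>x\<in>U. x)"
    define Set1 where "Set1 = (\<lambda>s. - v + s) ` SS (n-1) A'"
    define Set2 where "Set2 = insert SU ((\<lambda>p. SU - 2 * p) ` (V - {v}))"
    have fSet1: "finite Set1" unfolding Set1_def using SS_finite[OF fA'] by simp
    have fSet2: "finite Set2" unfolding Set2_def using fV by simp
    have cSet1: "card Set1 = card (SS (n-1) A')" unfolding Set1_def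
      by (rule card_image) (simp add: inj_on_def)
    have cSet2: "card Set2 = card N"
    proof -
      have i: "inj_on (\<lambda>p. SU - 2 * p) (V - {v})" by (simp add: inj_on_def)
      have "SU \<notin> (\<lambda>p. SU - 2 * p) ` (V - {v})" using Vpos by fastforce
      then have "card Set2 = Suc (card ((\<lambda>p. SU - 2 * p) ` (V - {v})))"
        unfolding Set2_def using fV by simp
      also have "\<dots> = Suc (card (V - {v}))" using card_image[OF i] by simp
      also have "\<dots> = card V" using vV fV cV cN1 by simp
      finally show ?thesis using cV by simp
    qed
    have Set1in: "Set1 \<subseteq> SS n A"
    proof
      fix s assume "s \<in> Set1"
      then obtain t where t: "t \<in> SS (n-1) A'" "s = - v + t" unfolding Set1_def by blast
      obtain C where C: "C \<subseteq> A'" "finite C" "card C = n - 1" "inj_on (\<lambda>x::int. x^2) C" "t = (\<Sum>x\<in>C. x)"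
        using t(1) by (rule SS_memE)
      have qC: "- v \<notin> C" using C(1) A'_def by auto
      have "- v + t = (\<Sum>x\<in>insert (- v) C. x)" using C(2,5) qC by simp
      moreover have "insert (- v) C \<subseteq> A" using C(1) A'_def mvA by auto
      moreover have "finite (insert (- v) C)" using C(2) by simp
      moreover have "card (insert (- v) C) = n" using C(2,3) qC n2 by simp
      moreover have "inj_on (\<lambda>x::int. x^2) (insert (- v) C)"
      proof -
        have e: "C - {- v} = C" using qC by blast
        have nq: "(- v)^2 \<notin> (\<lambda>x::int. x^2) ` C"
        proof
          assume "(- v)^2 \<in> (\<lambda>x::int. x^2) ` C"
          then obtain x where x: "x \<in> C" "(- v)^2 = x^2" by auto
          then have "x = - v \<or> x = v" using sq_eq_int by auto
          then show False using x(1) C(1) A'_def by auto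
        qed
        show ?thesis unfolding inj_on_insert e using C(4) nq by blast
      qed
      ultimately show "s \<in> SS n A" using t(2) SS_memI by metis
    qed
    have SUin: "SU \<in> SS n A" unfolding SU_def
      by (rule SS_memI) (use fU allc Uinj U_def in auto)
    have Set2in: "Set2 \<subseteq> SS n A"
    proof
      fix s assume "s \<in> Set2"
      then consider "s = SU" | p where "p \<in> V" "s = SU - 2 * p" unfolding Set2_def by blast
      then show "s \<in> SS n A"
      proof cases
        case 1 then show ?thesis using SUin by simp
      next
        case 2
        have pU: "p \<in> U" using VU 2(1) by blast
        have p0: "0 < p" using Vpos 2(1) by blast
        have mpA: "- p \<in> A" using VN 2(1) N_def by auto
        define C where "C = insert (- p) (U - {p})"
        have mpC: "- p \<notin> U - {p}" using p0 U_def by auto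
        have "s = (\<Sum>x\<in>C. x)" unfolding C_def using fU mpC pU 2(2) SU_def by (simp add: sum_diff1)
        moreover have "C \<subseteq> A" unfolding C_def using mpA U_def by auto
        moreover have "finite C" unfolding C_def using fU by simp
        moreover have "card C = n" unfolding C_def using fU mpC pU allc n2 by simp
        moreover have "inj_on (\<lambda>x::int. x^2) C"
        proof -
          have e: "U - {p} - {- p} = U - {p}" using mpC by blast
          have i1: "inj_on (\<lambda>x::int. x^2) (U - {p})" using Uinj by (rule inj_on_subset) auto
          have nq: "(- p)^2 \<notin> (\<lambda>x::int. x^2) ` (U - {p})"
          proof
            assume "(- p)^2 \<in> (\<lambda>x::int. x^2) ` (U - {p})"
            then obtain x where x: "x \<in> U - {p}" "(- p)^2 = x^2" by auto
            then have "x = - p \<or> x = p" using sq_eq_int by auto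
            then show False using x(1) p0 U_def by auto
          qed
          show ?thesis unfolding C_def inj_on_insert e using i1 nq by blast
        qed
        ultimately show ?thesis using SS_memI by metis
      qed
    qed
    have SUv: "(\<Sum>x\<in>U - {v}. x) = SU - v" unfolding SU_def using fU vU by (simp add: sum_diff1)
    have low: "s \<le> SU - 2 * v" if sS: "s \<in> Set1" for s
    proof -
      obtain t where t: "t \<in> SS (n-1) A'" "s = - v + t" using sS unfolding Set1_def by blast
      obtain C where C: "C \<subseteq> A'" "finite C" "card C = n - 1" "inj_on (\<lambda>x::int. x^2) C" "t = (\<Sum>x\<in>C. x)"
        using t(1) by (rule SS_memE)
      have "t \<le> (\<Sum>x\<in>{a\<in>A'. 0 \<le> a}. x)" using nonneg_sum[OF fA' C(1)] C(5) by simp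
      then have "t \<le> SU - v" using U' SUv by simp
      then show ?thesis using t(2) by simp
    qed
    have high: "SU - 2 * v < s" if sS: "s \<in> Set2" for s
    proof -
      consider "s = SU" | p where "p \<in> V - {v}" "s = SU - 2 * p" using sS unfolding Set2_def by blast
      then show ?thesis
      proof cases
        case 1 then show ?thesis using v0 by simp
      next
        case 2
        then have "p < v" using vge by force
        then show ?thesis using 2(2) by simp
      qed
    qed
    have dj: "Set1 \<inter> Set2 = {}" using low high by force
    have "card Set1 + card Set2 = card (Set1 \<union> Set2)"
      using card_Un_disjoint[OF fSet1 fSet2 dj] by simp
    also have "\<dots> \<le> card (SS n A)" using card_mono[OF fSS] Set1in Set2in by simp
    finally have cmp: "card (SS (n-1) A') + card N \<le> card (SS n A)" using cSet1 cSet2 by simp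
    define D where "D = int (card N)"
    define M where "M = int n"
    have kA: "int (card A) = M + D" using cardA allc D_def M_def by simp
    have kA': "int (card A') = M + D - 2" using cA' kA cardA cN1 allc n2 by simp
    have n1: "int (n - 1) = M - 1" using n2 M_def by simp
    have IH2: "2 * (M - 1) * (D - 1) - (M - 1) * (M - 2) + 4 \<le> 2 * int (card (SS (n-1) A'))"
    proof -
      have IH1: "2 * (M - 1) * ((M + D - 2) - (M - 1)) - (M - 1) * ((M - 1) - 1) + 4 \<le> 2 * int (card (SS (n-1) A'))"
        using IH unfolding kA' n1 .
      have e1: "(M + D - 2) - (M - 1) = D - 1" and e2: "(M - 1) - 1 = M - 2" by simp_all
      show ?thesis using IH1 unfolding e1 e2 .
    qed
    have iden: "2 * M * (M + D - M) - M * (M - 1) = 2 * (M - 1) * (D - 1) - (M - 1) * (M - 2) + 2 * D"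
      by (simp add: algebra_simps)
    have cmpI: "int (card (SS (n-1) A')) + D \<le> int (card (SS n A))" using cmp D_def by simp
    have "2 * M * (int (card A) - M) - M * (M - 1) + 4 \<le> 2 * int (card (SS n A))"
      unfolding kA using IH2 iden cmpI by linarith
    then show ?thesis unfolding M_def .
  qed
qed



lemma two_choose2: "2 * int (n choose 2) = int n * (int n - 1)"
proof -
  have "even (n * (n - 1))" by (cases "even n") auto
  then have "2 * (n choose 2) = n * (n - 1)" unfolding choose_two by simp
  then have "2 * int (n choose 2) = int (n * (n - 1))" by (metis of_nat_mult of_nat_numeral)
  also have "\<dots> = int n * (int n - 1)" by (cases n) (auto simp: algebra_simps)
  finally show ?thesis .
qed

lemma neg_part:
  fixes n k :: nat and A :: "int set"
  assumes "n > 2"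
    and "k \<ge> 2 * n - 1"
    and "finite A" and "card A = k"
    and "int (card (restricted_sumset n A)) = (int k - 1) * int n - 3 * int (n choose 2) + 1"
  shows "card {a \<in> A. a < 0} \<ge> n - 1"
proof (rule ccontr)
  assume "\<not> n - 1 \<le> card {a \<in> A. a < 0}"
  then have d: "card {a \<in> A. a < 0} + 2 \<le> n" by simp
  have "A = {a \<in> A. a < 0} \<union> {a\<in>A. 0 \<le> a}" by auto
  then have "card A \<le> card {a \<in> A. a < 0} + card {a\<in>A. 0 \<le> a}" by (metis card_Un_le)
  then have u: "n \<le> card {a\<in>A. 0 \<le> a}" using d assms(1,2,4) by simp
  have cl: "2 * int n * (int (card A) - int n) - int n * (int n - 1) + 4 \<le> 2 * int (card (SS n A))"
    by (rule claim) (use assms(1,3) d u in auto)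
  have e: "int (card (SS n A)) = (int k - 1) * int n - 3 * int (n choose 2) + 1"
    using assms(5) SS_eq by simp
  define M where "M = int n"
  define K where "K = int k"
  have e2: "2 * int (card (SS n A)) = 2 * (K - 1) * M - 3 * (M * (M - 1)) + 2"
    using e two_choose2[of n] unfolding M_def K_def by (simp add: algebra_simps)
  have cl2: "2 * M * (K - M) - M * (M - 1) + 4 \<le> 2 * int (card (SS n A))"
    using cl assms(4) unfolding M_def K_def by simp
  have iden: "2 * (K - 1) * M - 3 * (M * (M - 1)) + 2 = 2 * M * (K - M) - M * (M - 1) + 4 - 2"
    by (simp add: algebra_simps)
  show False using e2 cl2 iden by linarith
qed

theorem lemma3p1:
  fixes n k :: nat and A :: "int set"
  assumes "n > 2"
    and "k \<ge> 2 * n - 1"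
    and "finite A" and "card A = k"
    and "int (card (restricted_sumset n A)) = (int k - 1) * int n - 3 * int (n choose 2) + 1"
  shows "card {a \<in> A. a < 0} \<ge> n - 1 \<and> card {a \<in> A. a > 0} \<ge> n - 1"
proof
  show "card {a \<in> A. a < 0} \<ge> n - 1" using neg_part assms by blast
next
  define B where "B = uminus ` A"
  have i: "inj_on (uminus :: int \<Rightarrow> int) X" for X by (simp add: inj_on_def)
  have fB: "finite B" using assms(3) B_def by simp
  have cB: "card B = k" using card_image[OF i] assms(4) B_def by simp
  have sB: "int (card (restricted_sumset n B)) = (int k - 1) * int n - 3 * int (n choose 2) + 1"
    using assms(5) SS_neg_card[OF assms(3)] SS_eq B_def by simp
  have "card {a \<in> B. a < 0} \<ge> n - 1" using neg_part[OF assms(1,2) fB cB sB] .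
  moreover have "{a \<in> B. a < 0} = uminus ` {a \<in> A. a > 0}" unfolding B_def by auto
  moreover have "card (uminus ` {a \<in> A. a > 0}) = card {a \<in> A. a > 0}" using card_image[OF i] by simp
  ultimately show "card {a \<in> A. a > 0} \<ge> n - 1" by simp
qed

end
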